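(* Let $(G,T)$ be a terminal graph obtained from the terminal graph $(G-v,T\setminus\{v\})$ by introducing $v$, and let $k$ be a positive integer. Let $(H,\ell)=\mathcal{C}^c_k(G-v,T\setminus\{v\})$. Construct a labeled graph $(H',\ell')$ as follows. For every node $x$ of $H$ and every color $c\in\{1,\dots,k\}$: if the unique function $\delta:T\to\{1,\dots,k\}$ with $\delta(v)=c$ and $\delta|_{T\setminus\{v\}}=\ell(x)$ is a coloring of $G[T]$, introduce a node $x_c$ with $\ell'(x_c)=\delta$. For every pair of distinct nodes $x_c,y_d$, add an edge between them if and only if $x=y$, or $xy$ is an edge of $H$ and $c=d$. Then $(H',\ell')=\mathcal{C}^c_k(G,T)$. Moreover, given any certificate for $(H,\ell)$, there is a certificate for $(H',\ell')$ such that for every $k$-coloring $\gamma$ of $G$, if $x$ is the $\gamma|_{V(G)\setminus\{v\}}$-node of $H$ and $\gamma(v)=c$, then $x_c$ is the $\gamma$-node of $H'$.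
   Context: A terminal graph $(G,T)$ is a graph $G$ with $T\subseteq V(G)$. $(G,T)$ is obtained from $(G-v,T\setminus\{v\})$ by introducing $v$ if $T\ne V(G)$, $v\in T$ and $N(v)\subseteq T$. A $k$-coloring of $G$ is a map $\alpha:V(G)\to\{1,\dots,k\}$ with $\alpha(u)\ne\alpha(w)$ for all edges $uw$. $\mathcal{C}_k(G)$ has the $k$-colorings as nodes, adjacent iff they differ on exactly one vertex. For $T\subseteq V(G)$, label each coloring $\gamma$ by $\gamma|_T$. A label component is a maximal set of colorings with the same label inducing a connected subgraph of $\mathcal{C}_k(G)$. The contracted solution graph $\mathcal{C}^c_k(G,T)=(H,\ell)$ has one node $x$ per label component $S_x$, distinct $x,y$ adjacent iff some $\gamma\in S_x,\gamma'\in S_y$ are adjacent in $\mathcal{C}_k(G)$, and $\ell(x)$ the common label on $S_x$; labeled graphs are identified up to label-preserving isomorphism. A certificate for $(H,\ell)$ is an assignment of nonempty sets $S_x$ of $k$-colorings of $G$ to the nodes such that: the $S_x$ partition the $k$-colorings; $\gamma|_T=\ell(x)$ for $\gamma\in S_x$; adjacent nodes have distinct labels; each $S_x$ induces a connected subgraph of $\mathcal{C}_k(G)$; distinct $x,y$ are adjacent iff some $\gamma\in S_x$ and $\gamma'\in S_y$ are adjacent in $\mathcal{C}_k(G)$. The $\gamma$-node with respect to a certificate $S$ is the node $x$ with $\gamma\in S_x$. *)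

theory Defs
  imports Main "HOL-Library.FuncSet"
begin

definition simple_graph :: "'v set \<Rightarrow> ('v \<times> 'v) set \<Rightarrow> bool" where
  "simple_graph V E \<longleftrightarrow> finite V \<and> E \<subseteq> V \<times> V \<and> sym E \<and> irrefl E"

definition del_vertex :: "('v \<times> 'v) set \<Rightarrow> 'v \<Rightarrow> ('v \<times> 'v) set" where
  "del_vertex E v = {(a, b). (a, b) \<in> E \<and> a \<noteq> v \<and> b \<noteq> v}"

definition induced_edges :: "('v \<times> 'v) set \<Rightarrow> 'v set \<Rightarrow> ('v \<times> 'v) set" where
  "induced_edges E S = E \<inter> (S \<times> S)"

definition introduces :: "'v set \<Rightarrow> ('v \<times> 'v) set \<Rightarrow> 'v set \<Rightarrow> 'v \<Rightarrow> bool" where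
  "introduces V E T v \<longleftrightarrow> T \<subseteq> V \<and> T \<noteq> V \<and> v \<in> T \<and> {u. (v, u) \<in> E} \<subseteq> T"

definition colorings :: "nat \<Rightarrow> 'v set \<Rightarrow> ('v \<times> 'v) set \<Rightarrow> ('v \<Rightarrow> nat) set" where
  "colorings k V E = {\<alpha> \<in> V \<rightarrow>\<^sub>E {1..k}. \<forall>(u, w) \<in> E. \<alpha> u \<noteq> \<alpha> w}"

definition col_adj :: "'v set \<Rightarrow> ('v \<Rightarrow> nat) \<Rightarrow> ('v \<Rightarrow> nat) \<Rightarrow> bool" where
  "col_adj V \<alpha> \<beta> \<longleftrightarrow> card {u \<in> V. \<alpha> u \<noteq> \<beta> u} = 1"

definition col_connected :: "'v set \<Rightarrow> ('v \<Rightarrow> nat) set \<Rightarrow> bool" where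
  "col_connected V S \<longleftrightarrow> S \<noteq> {} \<and>
     (\<forall>\<alpha>\<in>S. \<forall>\<beta>\<in>S. (\<alpha>, \<beta>) \<in> {(a, b). a \<in> S \<and> b \<in> S \<and> col_adj V a b}\<^sup>*)"

definition same_label :: "'v set \<Rightarrow> ('v \<Rightarrow> nat) set \<Rightarrow> bool" where
  "same_label T S \<longleftrightarrow> (\<forall>\<alpha>\<in>S. \<forall>\<beta>\<in>S. restrict \<alpha> T = restrict \<beta> T)"

definition label_component ::
  "nat \<Rightarrow> 'v set \<Rightarrow> ('v \<times> 'v) set \<Rightarrow> 'v set \<Rightarrow> ('v \<Rightarrow> nat) set \<Rightarrow> bool" where
  "label_component k V E T S \<longleftrightarrow>
     S \<subseteq> colorings k V E \<and> same_label T S \<and> col_connected V S \<and>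
     (\<forall>S'. S \<subseteq> S' \<and> S' \<subseteq> colorings k V E \<and> same_label T S' \<and> col_connected V S' \<longrightarrow> S' = S)"

text \<open>A labeled graph: node set, (symmetric) adjacency relation, labeling of nodes by partial
  colorings (extensional functions 'v \<Rightarrow> nat).\<close>
type_synonym ('n, 'v) lgraph = "'n set \<times> ('n \<times> 'n) set \<times> ('n \<Rightarrow> 'v \<Rightarrow> nat)"

definition lp_iso :: "('n, 'v) lgraph \<Rightarrow> ('m, 'v) lgraph \<Rightarrow> bool" where
  "lp_iso G1 G2 \<longleftrightarrow> (case G1 of (N1, A1, l1) \<Rightarrow> case G2 of (N2, A2, l2) \<Rightarrow>
     (\<exists>f. bij_betw f N1 N2 \<and>
          (\<forall>x\<in>N1. \<forall>y\<in>N1. (x, y) \<in> A1 \<longleftrightarrow> (f x, f y) \<in> A2) \<and>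
          (\<forall>x\<in>N1. l2 (f x) = l1 x)))"

definition csg :: "nat \<Rightarrow> 'v set \<Rightarrow> ('v \<times> 'v) set \<Rightarrow> 'v set \<Rightarrow> (('v \<Rightarrow> nat) set, 'v) lgraph" where
  "csg k V E T =
    ({S. label_component k V E T S},
     {(S1, S2). label_component k V E T S1 \<and> label_component k V E T S2 \<and> S1 \<noteq> S2 \<and>
                (\<exists>\<gamma>\<in>S1. \<exists>\<gamma>'\<in>S2. col_adj V \<gamma> \<gamma>')},
     (\<lambda>S. restrict (SOME \<gamma>. \<gamma> \<in> S) T))"

definition certificate ::
  "nat \<Rightarrow> 'v set \<Rightarrow> ('v \<times> 'v) set \<Rightarrow> 'v set \<Rightarrow> ('n, 'v) lgraph \<Rightarrow> ('n \<Rightarrow> ('v \<Rightarrow> nat) set) \<Rightarrow> bool" where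
  "certificate k V E T H S \<longleftrightarrow> (case H of (N, A, l) \<Rightarrow>
     (\<forall>x\<in>N. S x \<noteq> {}) \<and>
     (\<forall>x\<in>N. \<forall>y\<in>N. x \<noteq> y \<longrightarrow> S x \<inter> S y = {}) \<and>
     (\<Union>x\<in>N. S x) = colorings k V E \<and>
     (\<forall>x\<in>N. \<forall>\<gamma>\<in>S x. restrict \<gamma> T = l x) \<and>
     (\<forall>x\<in>N. \<forall>y\<in>N. (x, y) \<in> A \<longrightarrow> l x \<noteq> l y) \<and>
     (\<forall>x\<in>N. col_connected V (S x)) \<and>
     (\<forall>x\<in>N. \<forall>y\<in>N. x \<noteq> y \<longrightarrow> ((x, y) \<in> A \<longleftrightarrow> (\<exists>\<gamma>\<in>S x. \<exists>\<gamma>'\<in>S y. col_adj V \<gamma> \<gamma>'))))"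

definition intro_label :: "'v set \<Rightarrow> 'v \<Rightarrow> ('v \<Rightarrow> nat) \<Rightarrow> nat \<Rightarrow> ('v \<Rightarrow> nat)" where
  "intro_label T v lb c = restrict (\<lambda>u. if u = v then c else lb u) T"

definition intro_graph ::
  "nat \<Rightarrow> ('v \<times> 'v) set \<Rightarrow> 'v set \<Rightarrow> 'v \<Rightarrow> ('n, 'v) lgraph \<Rightarrow> ('n \<times> nat, 'v) lgraph" where
  "intro_graph k E T v H = (case H of (N, A, l) \<Rightarrow>
     (let N' = {(x, c). x \<in> N \<and> c \<in> {1..k} \<and>
                        intro_label T v (l x) c \<in> colorings k T (induced_edges E T)}
      in (N',
          {((x, c), (y, d)). (x, c) \<in> N' \<and> (y, d) \<in> N' \<and> (x, c) \<noteq> (y, d) \<and>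
                             (x = y \<or> ((x, y) \<in> A \<and> c = d))},
          (\<lambda>(x, c). intro_label T v (l x) c))))"

end

theory Submission
  imports Defs
begin


abbreviation "RS V S \<equiv> {(a, b). a \<in> S \<and> b \<in> S \<and> col_adj V a b}"

lemma col_adj_sym: "col_adj V a b = col_adj V b a"
proof -
  have "{u \<in> V. a u \<noteq> b u} = {u \<in> V. b u \<noteq> a u}" by auto
  then show ?thesis unfolding col_adj_def by simp
qed

lemma RS_sym: "sym (RS V S)"
  unfolding sym_def using col_adj_sym by blast

lemma RS_rev: "(a, b) \<in> (RS V S)\<^sup>* \<Longrightarrow> (b, a) \<in> (RS V S)\<^sup>*"
  using sym_rtrancl[OF RS_sym] unfolding sym_def by blast

lemma RS_mono: "S \<subseteq> S' \<Longrightarrow> (a, b) \<in> (RS V S)\<^sup>* \<Longrightarrow> (a, b) \<in> (RS V S')\<^sup>*"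
proof -
  assume "S \<subseteq> S'" "(a, b) \<in> (RS V S)\<^sup>*"
  moreover have "RS V S \<subseteq> RS V S'" using \<open>S \<subseteq> S'\<close> by blast
  ultimately show ?thesis using rtrancl_mono by blast
qed

lemma rtrancl_map:
  assumes "(a, b) \<in> r\<^sup>*" "\<And>x y. (x, y) \<in> r \<Longrightarrow> (g x, g y) \<in> s"
  shows "(g a, g b) \<in> s\<^sup>*"
  using assms(1)
proof (induction rule: rtrancl_induct)
  case base then show ?case by simp
next
  case (step y z) then show ?case using assms(2) by (meson rtrancl.rtrancl_into_rtrancl)
qed

lemma comp_inter:
  assumes c1: "label_component k V E T S1" and c2: "label_component k V E T S2"
    and g: "\<gamma> \<in> S1" "\<gamma> \<in> S2"
  shows "S1 = S2"
proof -
  let ?U = "S1 \<union> S2"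
  have sub: "?U \<subseteq> colorings k V E" using c1 c2 unfolding label_component_def by blast
  have "same_label T S1" "same_label T S2" using c1 c2 unfolding label_component_def by simp_all
  then have "\<forall>a\<in>S1. restrict a T = restrict \<gamma> T" "\<forall>a\<in>S2. restrict a T = restrict \<gamma> T"
    using g unfolding same_label_def by blast+
  then have sl: "same_label T ?U" unfolding same_label_def by (metis UnE)
  have con1: "\<forall>a\<in>S1. \<forall>b\<in>S1. (a, b) \<in> (RS V S1)\<^sup>*" "\<forall>a\<in>S2. \<forall>b\<in>S2. (a, b) \<in> (RS V S2)\<^sup>*"
    using c1 c2 unfolding label_component_def col_connected_def by auto
  have "\<forall>a\<in>?U. \<forall>b\<in>?U. (a, b) \<in> (RS V ?U)\<^sup>*"
  proof (intro ballI)
    fix a b assume a: "a \<in> ?U" and b: "b \<in> ?U"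
    have "(a, \<gamma>) \<in> (RS V ?U)\<^sup>*" using a con1 g RS_mono[of S1 ?U] RS_mono[of S2 ?U] by blast
    moreover have "(\<gamma>, b) \<in> (RS V ?U)\<^sup>*" using b con1 g RS_mono[of S1 ?U] RS_mono[of S2 ?U] by blast
    ultimately show "(a, b) \<in> (RS V ?U)\<^sup>*" by (meson rtrancl_trans)
  qed
  then have "col_connected V ?U" unfolding col_connected_def using g by blast
  then have "?U = S1" "?U = S2" using c1 c2 sub sl unfolding label_component_def
    by (meson Un_upper1 Un_upper2)+
  then show ?thesis by simp
qed

lemma comp_adj_label:
  assumes c1: "label_component k V E T S1" and c2: "label_component k V E T S2"
    and ne: "S1 \<noteq> S2" and g: "\<gamma> \<in> S1" "\<gamma>' \<in> S2" and adj: "col_adj V \<gamma> \<gamma>'"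
  shows "restrict \<gamma> T \<noteq> restrict \<gamma>' T"
proof
  assume eq: "restrict \<gamma> T = restrict \<gamma>' T"
  let ?U = "S1 \<union> S2"
  have sub: "?U \<subseteq> colorings k V E" using c1 c2 unfolding label_component_def by blast
  have "same_label T S1" "same_label T S2" using c1 c2 unfolding label_component_def by simp_all
  then have "\<forall>a\<in>S1. restrict a T = restrict \<gamma> T" "\<forall>a\<in>S2. restrict a T = restrict \<gamma>' T"
    using g unfolding same_label_def by blast+
  then have sl: "same_label T ?U" unfolding same_label_def using eq by (metis UnE)
  have con1: "\<forall>a\<in>S1. \<forall>b\<in>S1. (a, b) \<in> (RS V S1)\<^sup>*" "\<forall>a\<in>S2. \<forall>b\<in>S2. (a, b) \<in> (RS V S2)\<^sup>*"
    using c1 c2 unfolding label_component_def col_connected_def by auto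
  have e: "(\<gamma>, \<gamma>') \<in> (RS V ?U)\<^sup>*" using g adj by blast
  have e': "(\<gamma>', \<gamma>) \<in> (RS V ?U)\<^sup>*" using RS_rev[OF e] .
  have "\<forall>a\<in>?U. \<forall>b\<in>?U. (a, b) \<in> (RS V ?U)\<^sup>*"
  proof (intro ballI)
    fix a b assume a: "a \<in> ?U" and b: "b \<in> ?U"
    have "(a, \<gamma>) \<in> (RS V ?U)\<^sup>*"
    proof (cases "a \<in> S1")
      case True then show ?thesis using con1 g RS_mono[of S1 ?U] by blast
    next
      case False then have "(a, \<gamma>') \<in> (RS V ?U)\<^sup>*" using a con1 g RS_mono[of S2 ?U] by blast
      then show ?thesis using e' by (meson rtrancl_trans)
    qed
    moreover have "(\<gamma>, b) \<in> (RS V ?U)\<^sup>*"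
    proof (cases "b \<in> S1")
      case True then show ?thesis using con1 g RS_mono[of S1 ?U] by blast
    next
      case False then have "(\<gamma>', b) \<in> (RS V ?U)\<^sup>*" using b con1 g RS_mono[of S2 ?U] by blast
      then show ?thesis using e by (meson rtrancl_trans)
    qed
    ultimately show "(a, b) \<in> (RS V ?U)\<^sup>*" by (meson rtrancl_trans)
  qed
  then have "col_connected V ?U" unfolding col_connected_def using g by blast
  then have "?U = S1" "?U = S2" using c1 c2 sub sl unfolding label_component_def
    by (meson Un_upper1 Un_upper2)+
  then show False using ne by simp
qed

lemma comp_exists:
  assumes g: "\<gamma> \<in> colorings k V E"
  shows "\<exists>S. label_component k V E T S \<and> \<gamma> \<in> S"
proof -
  define R' where "R' = {(a, b). a \<in> colorings k V E \<and> b \<in> colorings k V E \<and>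
     restrict a T = restrict \<gamma> T \<and> restrict b T = restrict \<gamma> T \<and> col_adj V a b}"
  define C where "C = {\<beta>. (\<gamma>, \<beta>) \<in> R'\<^sup>*}"
  have gC: "\<gamma> \<in> C" unfolding C_def by simp
  have CP: "\<beta> \<in> colorings k V E \<and> restrict \<beta> T = restrict \<gamma> T" if "\<beta> \<in> C" for \<beta>
  proof -
    have "(\<gamma>, \<beta>) \<in> R'\<^sup>*" using that unfolding C_def by simp
    then show ?thesis by (induction rule: rtrancl_induct) (auto simp: g R'_def)
  qed
  have sub: "C \<subseteq> colorings k V E" using CP by blast
  have sl: "same_label T C" using CP unfolding same_label_def by simp
  have reach: "(\<gamma>, \<beta>) \<in> (RS V C)\<^sup>*" if "\<beta> \<in> C" for \<beta>
  proof -
    have "(\<gamma>, \<beta>) \<in> R'\<^sup>*" using that unfolding C_def by simp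
    then show ?thesis
    proof (induction rule: rtrancl_induct)
      case base then show ?case by simp
    next
      case (step y z)
      then have "y \<in> C" "z \<in> C" unfolding C_def by (auto intro: rtrancl_into_rtrancl)
      then have "(y, z) \<in> RS V C" using step(2) unfolding R'_def by blast
      then show ?case using step(3) by (meson rtrancl_into_rtrancl)
    qed
  qed
  have "col_connected V C" unfolding col_connected_def
  proof (intro conjI ballI)
    show "C \<noteq> {}" using gC by blast
    fix a b assume "a \<in> C" "b \<in> C"
    then have "(a, \<gamma>) \<in> (RS V C)\<^sup>*" "(\<gamma>, b) \<in> (RS V C)\<^sup>*" using reach RS_rev by blast+
    then show "(a, b) \<in> (RS V C)\<^sup>*" by (rule rtrancl_trans)
  qed
  moreover have "S' = C" if "C \<subseteq> S'" "S' \<subseteq> colorings k V E" "same_label T S'"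
      "col_connected V S'" for S'
  proof
    show "S' \<subseteq> C"
    proof
      fix \<beta> assume b: "\<beta> \<in> S'"
      have gS: "\<gamma> \<in> S'" using gC that by blast
      have "(\<gamma>, \<beta>) \<in> (RS V S')\<^sup>*" using that(4) b gS unfolding col_connected_def by blast
      moreover have "RS V S' \<subseteq> R'"
      proof
        fix p assume p: "p \<in> RS V S'"
        obtain a b where ab: "p = (a, b)" "a \<in> S'" "b \<in> S'" "col_adj V a b" using p by blast
        have "restrict a T = restrict \<gamma> T" "restrict b T = restrict \<gamma> T"
          using that(3) ab gS unfolding same_label_def by blast+
        moreover have "a \<in> colorings k V E" "b \<in> colorings k V E" using that(2) ab by blast+
        ultimately show "p \<in> R'" unfolding R'_def using ab by simp
      qed
      ultimately have "(\<gamma>, \<beta>) \<in> R'\<^sup>*" using rtrancl_mono by blast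
      then show "\<beta> \<in> C" unfolding C_def by simp
    qed
  qed (use that in blast)
  ultimately have "label_component k V E T C" using sub sl unfolding label_component_def by blast
  then show ?thesis using gC by blast
qed


lemma iso_cert:
  assumes "lp_iso (N, A, l) (csg k V E T)"
  shows "\<exists>S. certificate k V E T (N, A, l) S"
proof -
  let ?C = "{S. label_component k V E T S}"
  let ?A = "{(S1, S2). label_component k V E T S1 \<and> label_component k V E T S2 \<and> S1 \<noteq> S2 \<and>
                (\<exists>\<gamma>\<in>S1. \<exists>\<gamma>'\<in>S2. col_adj V \<gamma> \<gamma>')}"
  obtain f where bij: "bij_betw f N ?C"
    and ed: "\<forall>x\<in>N. \<forall>y\<in>N. (x, y) \<in> A \<longleftrightarrow> (f x, f y) \<in> ?A"
    and lab: "\<forall>x\<in>N. restrict (SOME \<gamma>. \<gamma> \<in> f x) T = l x"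
    using assms unfolding lp_iso_def csg_def by auto
  have comp: "label_component k V E T (f x)" if "x \<in> N" for x
    using bij that unfolding bij_betw_def by blast
  have inj: "f x \<noteq> f y" if "x \<in> N" "y \<in> N" "x \<noteq> y" for x y
    using bij that unfolding bij_betw_def inj_on_def by blast
  have ne: "f x \<noteq> {}" if "x \<in> N" for x
    using comp[OF that] unfolding label_component_def col_connected_def by blast
  have labx: "restrict \<gamma> T = l x" if "x \<in> N" "\<gamma> \<in> f x" for x \<gamma>
  proof -
    have "(SOME \<gamma>. \<gamma> \<in> f x) \<in> f x" using that(2) by (rule someI[where P="\<lambda>\<gamma>. \<gamma> \<in> f x"])
    moreover have "same_label T (f x)" using comp[OF that(1)] unfolding label_component_def by simp
    ultimately have "restrict \<gamma> T = restrict (SOME \<gamma>. \<gamma> \<in> f x) T"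
      using that(2) unfolding same_label_def by blast
    then show ?thesis using lab that(1) by simp
  qed
  have c1: "\<forall>x\<in>N. f x \<noteq> {}" using ne by blast
  have c2: "\<forall>x\<in>N. \<forall>y\<in>N. x \<noteq> y \<longrightarrow> f x \<inter> f y = {}"
  proof (intro ballI impI)
    fix x y assume xy: "x \<in> N" "y \<in> N" "x \<noteq> y"
    show "f x \<inter> f y = {}"
    proof (rule ccontr)
      assume "f x \<inter> f y \<noteq> {}"
      then obtain \<gamma> where "\<gamma> \<in> f x" "\<gamma> \<in> f y" by blast
      then have "f x = f y" using comp_inter[OF comp[OF xy(1)] comp[OF xy(2)]] by blast
      then show False using inj xy by blast
    qed
  qed
  have c3: "(\<Union>x\<in>N. f x) = colorings k V E"
  proof
    show "(\<Union>x\<in>N. f x) \<subseteq> colorings k V E" using comp unfolding label_component_def by blast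
    show "colorings k V E \<subseteq> (\<Union>x\<in>N. f x)"
    proof
      fix \<gamma> assume "\<gamma> \<in> colorings k V E"
      then obtain S where S: "label_component k V E T S" "\<gamma> \<in> S" using comp_exists by blast
      then obtain x where "x \<in> N" "f x = S" using bij unfolding bij_betw_def by (metis (no_types, lifting) imageE mem_Collect_eq)
      then show "\<gamma> \<in> (\<Union>x\<in>N. f x)" using S by blast
    qed
  qed
  have c4: "\<forall>x\<in>N. \<forall>\<gamma>\<in>f x. restrict \<gamma> T = l x" using labx by blast
  have c5: "\<forall>x\<in>N. \<forall>y\<in>N. (x, y) \<in> A \<longrightarrow> l x \<noteq> l y"
  proof (intro ballI impI)
    fix x y assume xy: "x \<in> N" "y \<in> N" "(x, y) \<in> A"
    then have "(f x, f y) \<in> ?A" using ed by blast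
    then obtain \<gamma> \<gamma>' where g: "\<gamma> \<in> f x" "\<gamma>' \<in> f y" "col_adj V \<gamma> \<gamma>'" "f x \<noteq> f y" by blast
    have "restrict \<gamma> T \<noteq> restrict \<gamma>' T" using comp_adj_label[OF comp comp g(4) g(1,2,3)] xy by blast
    then show "l x \<noteq> l y" using labx xy g by metis
  qed
  have c6: "\<forall>x\<in>N. col_connected V (f x)" using comp unfolding label_component_def by blast
  have c7: "\<forall>x\<in>N. \<forall>y\<in>N. x \<noteq> y \<longrightarrow> ((x, y) \<in> A \<longleftrightarrow> (\<exists>\<gamma>\<in>f x. \<exists>\<gamma>'\<in>f y. col_adj V \<gamma> \<gamma>'))"
  proof (intro ballI impI)
    fix x y assume xy: "x \<in> N" "y \<in> N" "x \<noteq> y"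
    have "(x, y) \<in> A \<longleftrightarrow> (f x, f y) \<in> ?A" using ed xy by blast
    also have "\<dots> \<longleftrightarrow> (\<exists>\<gamma>\<in>f x. \<exists>\<gamma>'\<in>f y. col_adj V \<gamma> \<gamma>')" using comp xy inj by simp
    finally show "(x, y) \<in> A \<longleftrightarrow> (\<exists>\<gamma>\<in>f x. \<exists>\<gamma>'\<in>f y. col_adj V \<gamma> \<gamma>')" .
  qed
  have "certificate k V E T (N, A, l) f"
    unfolding certificate_def prod.case by (intro conjI c1 c2 c3 c4 c5 c6 c7)
  then show ?thesis by blast
qed

lemma cert_comp:
  assumes cert: "certificate k V E T (N, A, l) S" and x: "x \<in> N"
  shows "label_component k V E T (S x)"
proof -
  have ne: "\<forall>x\<in>N. S x \<noteq> {}"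
    and un: "(\<Union>x\<in>N. S x) = colorings k V E"
    and lb: "\<forall>x\<in>N. \<forall>\<gamma>\<in>S x. restrict \<gamma> T = l x"
    and ad: "\<forall>x\<in>N. \<forall>y\<in>N. (x, y) \<in> A \<longrightarrow> l x \<noteq> l y"
    and cc: "\<forall>x\<in>N. col_connected V (S x)"
    and ed: "\<forall>x\<in>N. \<forall>y\<in>N. x \<noteq> y \<longrightarrow> ((x, y) \<in> A \<longleftrightarrow> (\<exists>\<gamma>\<in>S x. \<exists>\<gamma>'\<in>S y. col_adj V \<gamma> \<gamma>'))"
    using cert unfolding certificate_def by simp_all
  have sub: "S x \<subseteq> colorings k V E" using un x by blast
  have sl: "same_label T (S x)" using lb x unfolding same_label_def by simp
  have mx: "S' = S x" if S': "S x \<subseteq> S'" "S' \<subseteq> colorings k V E" "same_label T S'" "col_connected V S'" for S'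
  proof
    show "S' \<subseteq> S x"
    proof
      fix \<beta> assume b: "\<beta> \<in> S'"
      obtain \<alpha> where a: "\<alpha> \<in> S x" using ne x by blast
      have "(\<alpha>, \<beta>) \<in> (RS V S')\<^sup>*" using S'(1,4) a b unfolding col_connected_def by blast
      then show "\<beta> \<in> S x"
      proof (induction rule: rtrancl_induct)
        case base then show ?case using a .
      next
        case (step y z)
        then have z: "z \<in> S'" "col_adj V y z" by auto
        then obtain w where w: "w \<in> N" "z \<in> S w" using S'(2) un by blast
        show ?case
        proof (rule ccontr)
          assume "z \<notin> S x"
          then have "w \<noteq> x" using w by blast
          then have "(x, w) \<in> A \<longleftrightarrow> (\<exists>\<gamma>\<in>S x. \<exists>\<gamma>'\<in>S w. col_adj V \<gamma> \<gamma>')" using ed x w by metis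
          then have "(x, w) \<in> A" using w step(3) z(2) by blast
          then have "l x \<noteq> l w" using ad x w by blast
          moreover have "restrict y T = restrict z T" using S'(3) step(2) z(1) unfolding same_label_def by blast
          ultimately show False using lb x w step(3) by metis
        qed
      qed
    qed
  qed (use that in blast)
  show ?thesis unfolding label_component_def using sub sl mx cc x by blast
qed

lemma cert_iso:
  assumes cert: "certificate k V E T (N, A, l) S"
  shows "lp_iso (N, A, l) (csg k V E T)"
proof -
  have ne: "\<forall>x\<in>N. S x \<noteq> {}"
    and dj: "\<forall>x\<in>N. \<forall>y\<in>N. x \<noteq> y \<longrightarrow> S x \<inter> S y = {}"
    and un: "(\<Union>x\<in>N. S x) = colorings k V E"
    and lb: "\<forall>x\<in>N. \<forall>\<gamma>\<in>S x. restrict \<gamma> T = l x"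
    and ad: "\<forall>x\<in>N. \<forall>y\<in>N. (x, y) \<in> A \<longrightarrow> l x \<noteq> l y"
    and ed: "\<forall>x\<in>N. \<forall>y\<in>N. x \<noteq> y \<longrightarrow> ((x, y) \<in> A \<longleftrightarrow> (\<exists>\<gamma>\<in>S x. \<exists>\<gamma>'\<in>S y. col_adj V \<gamma> \<gamma>'))"
    using cert unfolding certificate_def by simp_all
  have comp: "label_component k V E T (S x)" if "x \<in> N" for x using cert_comp[OF cert that] .
  have inj: "inj_on S N"
    unfolding inj_on_def using ne dj by (metis Int_absorb)
  have surj: "S ` N = {S. label_component k V E T S}"
  proof
    show "S ` N \<subseteq> {S. label_component k V E T S}" using comp by blast
    show "{S. label_component k V E T S} \<subseteq> S ` N"
    proof
      fix C assume "C \<in> {S. label_component k V E T S}"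
      then have C: "label_component k V E T C" by simp
      then obtain \<gamma> where g: "\<gamma> \<in> C" unfolding label_component_def col_connected_def by blast
      then have "\<gamma> \<in> colorings k V E" using C unfolding label_component_def by blast
      then obtain x where x: "x \<in> N" "\<gamma> \<in> S x" using un by blast
      then have "S x = C" using comp_inter[OF comp[OF x(1)] C x(2) g] by simp
      then show "C \<in> S ` N" using x by blast
    qed
  qed
  have bij: "bij_betw S N {S. label_component k V E T S}"
    unfolding bij_betw_def using inj surj by blast
  have edges: "(x, y) \<in> A \<longleftrightarrow> (S x, S y) \<in> {(S1, S2). label_component k V E T S1 \<and> label_component k V E T S2 \<and> S1 \<noteq> S2 \<and>
                (\<exists>\<gamma>\<in>S1. \<exists>\<gamma>'\<in>S2. col_adj V \<gamma> \<gamma>')}" if xy: "x \<in> N" "y \<in> N" for x y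
  proof (cases "x = y")
    case True
    then show ?thesis using ad xy by blast
  next
    case False
    then have "S x \<noteq> S y" using inj xy unfolding inj_on_def by blast
    then show ?thesis using ed xy False comp by auto
  qed
  have labs: "restrict (SOME \<gamma>. \<gamma> \<in> S x) T = l x" if x: "x \<in> N" for x
  proof -
    obtain \<gamma> where "\<gamma> \<in> S x" using ne x by blast
    then have "(SOME \<gamma>. \<gamma> \<in> S x) \<in> S x" by (rule someI[where P="\<lambda>\<gamma>. \<gamma> \<in> S x"])
    then show ?thesis using lb x by blast
  qed
  let ?A = "{(S1, S2). label_component k V E T S1 \<and> label_component k V E T S2 \<and> S1 \<noteq> S2 \<and>
                (\<exists>\<gamma>\<in>S1. \<exists>\<gamma>'\<in>S2. col_adj V \<gamma> \<gamma>')}"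
  have e2: "\<forall>x\<in>N. \<forall>y\<in>N. (x, y) \<in> A \<longleftrightarrow> (S x, S y) \<in> ?A"
  proof (intro ballI)
    fix x y assume "x \<in> N" "y \<in> N"
    then show "(x, y) \<in> A \<longleftrightarrow> (S x, S y) \<in> ?A" by (rule edges)
  qed
  have l2: "\<forall>x\<in>N. restrict (SOME \<gamma>. \<gamma> \<in> S x) T = l x" using labs by blast
  show ?thesis unfolding lp_iso_def csg_def prod.case
    by (intro exI[of _ S] conjI bij e2 l2)
qed


lemma P2:
  assumes sg: "simple_graph V E" and intr: "introduces V E T v"
    and cert: "certificate k (V - {v}) (del_vertex E v) (T - {v}) (N, A, l) S"
  shows "\<exists>S'. certificate k V E T (intro_graph k E T v (N, A, l)) S' \<and>
          (\<forall>\<gamma>\<in>colorings k V E. \<forall>x\<in>N. restrict \<gamma> (V - {v}) \<in> S x \<longrightarrow>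
              (x, \<gamma> v) \<in> fst (intro_graph k E T v (N, A, l)) \<and> \<gamma> \<in> S' (x, \<gamma> v))"
proof -
  let ?V0 = "V - {v}" and ?E0 = "del_vertex E v" and ?T0 = "T - {v}"
  have ne: "\<forall>x\<in>N. S x \<noteq> {}"
    and dj: "\<forall>x\<in>N. \<forall>y\<in>N. x \<noteq> y \<longrightarrow> S x \<inter> S y = {}"
    and un: "(\<Union>x\<in>N. S x) = colorings k ?V0 ?E0"
    and lb: "\<forall>x\<in>N. \<forall>\<gamma>\<in>S x. restrict \<gamma> ?T0 = l x"
    and ad: "\<forall>x\<in>N. \<forall>y\<in>N. (x, y) \<in> A \<longrightarrow> l x \<noteq> l y"
    and cc: "\<forall>x\<in>N. col_connected ?V0 (S x)"
    and ed: "\<forall>x\<in>N. \<forall>y\<in>N. x \<noteq> y \<longrightarrow> ((x, y) \<in> A \<longleftrightarrow> (\<exists>\<gamma>\<in>S x. \<exists>\<gamma>'\<in>S y. col_adj ?V0 \<gamma> \<gamma>'))"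
    using cert unfolding certificate_def by simp_all
  have EV: "E \<subseteq> V \<times> V" and symE: "sym E" and irrE: "irrefl E"
    using sg unfolding simple_graph_def by auto
  have TV: "T \<subseteq> V" and vT: "v \<in> T" and nb: "\<And>u. (v, u) \<in> E \<Longrightarrow> u \<in> T"
    using intr unfolding introduces_def by auto
  have vV: "v \<in> V" using TV vT by blast
  have nb2: "u \<in> T" if "(u, v) \<in> E" for u using nb symE that unfolding sym_def by blast

  define N' where "N' = {(x, c). x \<in> N \<and> c \<in> {1..k} \<and>
                        intro_label T v (l x) c \<in> colorings k T (induced_edges E T)}"
  define A' where "A' = {((x, c), (y, d)). (x, c) \<in> N' \<and> (y, d) \<in> N' \<and> (x, c) \<noteq> (y, d) \<and>
                             (x = y \<or> ((x, y) \<in> A \<and> c = d))}"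
  define l' where "l' = (\<lambda>(x, c). intro_label T v (l x) c)"
  have IG: "intro_graph k E T v (N, A, l) = (N', A', l')"
    unfolding intro_graph_def Let_def N'_def A'_def l'_def by simp
  define S' where "S' = (\<lambda>(x, c). {\<gamma> \<in> colorings k V E. restrict \<gamma> ?V0 \<in> S x \<and> \<gamma> v = c})"

  have Sx_col: "\<beta> \<in> colorings k ?V0 ?E0" if "x \<in> N" "\<beta> \<in> S x" for x \<beta>
    using un that by blast

  have extc: "\<beta>(v := c) \<in> colorings k V E"
    if b: "\<beta> \<in> colorings k ?V0 ?E0" and c: "c \<in> {1..k}"
      and il: "intro_label T v (restrict \<beta> ?T0) c \<in> colorings k T (induced_edges E T)" for \<beta> c
  proof -
    have bP: "\<beta> \<in> ?V0 \<rightarrow>\<^sub>E {1..k}" and bE: "\<forall>(u, w)\<in>?E0. \<beta> u \<noteq> \<beta> w"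
      using b unfolding colorings_def by auto
    have "\<beta>(v := c) \<in> V \<rightarrow>\<^sub>E {1..k}"
      using bP c vV unfolding PiE_def extensional_def Pi_def by auto
    moreover have "\<forall>(u, w)\<in>E. (\<beta>(v := c)) u \<noteq> (\<beta>(v := c)) w"
    proof (clarify)
      fix u w assume uw: "(u, w) \<in> E" and eq: "(\<beta>(v := c)) u = (\<beta>(v := c)) w"
      let ?d = "intro_label T v (restrict \<beta> ?T0) c"
      have dE: "\<forall>(a, b)\<in>induced_edges E T. ?d a \<noteq> ?d b" using il unfolding colorings_def by auto
      have "u \<noteq> w" using uw irrE unfolding irrefl_def by blast
      show False
      proof (cases "u = v")
        case True
        then have wT: "w \<in> T" "w \<noteq> v" using nb uw \<open>u \<noteq> w\<close> by auto
        then have "(u, w) \<in> induced_edges E T" using uw True vT unfolding induced_edges_def by auto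
        then have "?d u \<noteq> ?d w" using dE by blast
        moreover have "?d u = c" "?d w = \<beta> w" using True wT vT unfolding intro_label_def by auto
        ultimately show False using eq True wT by simp
      next
        case False
        show False
        proof (cases "w = v")
          case True
          then have uT: "u \<in> T" using nb2 uw by blast
          then have "(u, w) \<in> induced_edges E T" using uw True vT unfolding induced_edges_def by auto
          then have "?d u \<noteq> ?d w" using dE by blast
          moreover have "?d w = c" "?d u = \<beta> u" using True uT False vT unfolding intro_label_def by auto
          ultimately show False using eq True False by simp
        next
          case False2: False
          then have "(u, w) \<in> ?E0" using uw \<open>u \<noteq> v\<close> unfolding del_vertex_def by auto
          then show False using bE eq False False2 by auto
        qed
      qed
    qed
    ultimately show ?thesis unfolding colorings_def by blast
  qed

  have ext_restr: "restrict (\<beta>(v := c)) ?V0 = \<beta>" if "\<beta> \<in> colorings k ?V0 ?E0" for \<beta> c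
  proof -
    have "\<beta> \<in> extensional ?V0" using that unfolding colorings_def PiE_def by blast
    then show ?thesis unfolding extensional_def restrict_def by (auto intro!: ext)
  qed

  have restr: "restrict \<gamma> ?V0 \<in> colorings k ?V0 ?E0"
    "restrict \<gamma> T \<in> colorings k T (induced_edges E T)"
    "(restrict \<gamma> ?V0)(v := \<gamma> v) = \<gamma>" "\<gamma> v \<in> {1..k}"
    if g: "\<gamma> \<in> colorings k V E" for \<gamma>
  proof -
    have gP: "\<gamma> \<in> V \<rightarrow>\<^sub>E {1..k}" and gE: "\<forall>(u, w)\<in>E. \<gamma> u \<noteq> \<gamma> w"
      using g unfolding colorings_def by auto
    show "\<gamma> v \<in> {1..k}" using gP vV by blast
    have "restrict \<gamma> ?V0 \<in> ?V0 \<rightarrow>\<^sub>E {1..k}" using gP by auto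
    moreover have "\<forall>(u, w)\<in>?E0. restrict \<gamma> ?V0 u \<noteq> restrict \<gamma> ?V0 w"
      using gE EV unfolding del_vertex_def by auto
    ultimately show "restrict \<gamma> ?V0 \<in> colorings k ?V0 ?E0" unfolding colorings_def by blast
    have "restrict \<gamma> T \<in> T \<rightarrow>\<^sub>E {1..k}" using gP TV by auto
    moreover have "\<forall>(u, w)\<in>induced_edges E T. restrict \<gamma> T u \<noteq> restrict \<gamma> T w"
      using gE unfolding induced_edges_def by auto
    ultimately show "restrict \<gamma> T \<in> colorings k T (induced_edges E T)" unfolding colorings_def by blast
    have "\<gamma> \<in> extensional V" using gP unfolding PiE_def by blast
    then show "(restrict \<gamma> ?V0)(v := \<gamma> v) = \<gamma>" unfolding extensional_def by (auto intro!: ext)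
  qed

  have ilab: "intro_label T v (l x) (\<gamma> v) = restrict \<gamma> T"
    if "\<gamma> \<in> colorings k V E" "x \<in> N" "restrict \<gamma> ?V0 \<in> S x" for \<gamma> x
  proof -
    have "l x = restrict (restrict \<gamma> ?V0) ?T0" using lb that by metis
    then have lx: "\<And>u. l x u = (if u \<in> ?T0 then \<gamma> u else undefined)" using TV by auto
    show ?thesis unfolding intro_label_def
    proof (rule ext)
      fix u show "restrict (\<lambda>u. if u = v then \<gamma> v else l x u) T u = restrict \<gamma> T u"
        using lx[of u] by (cases "u \<in> T"; cases "u = v") auto
    qed
  qed

  have lift: "\<beta>(v := c) \<in> S' (x, c)" if "(x, c) \<in> N'" "\<beta> \<in> S x" for x c \<beta>
  proof -
    have x: "x \<in> N" "c \<in> {1..k}" "intro_label T v (l x) c \<in> colorings k T (induced_edges E T)"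
      using that(1) unfolding N'_def by auto
    have b: "\<beta> \<in> colorings k ?V0 ?E0" using Sx_col x(1) that(2) .
    have "restrict \<beta> ?T0 = l x" using lb x(1) that(2) by blast
    then have "\<beta>(v := c) \<in> colorings k V E" using extc[OF b x(2)] x(3) by simp
    then show ?thesis unfolding S'_def using ext_restr[OF b] that(2) by simp
  qed

  have adj_same: "col_adj V (\<beta>(v := c)) (\<beta>'(v := c)) = col_adj ?V0 \<beta> \<beta>'" for \<beta> \<beta>' c
  proof -
    have "{u \<in> V. (\<beta>(v := c)) u \<noteq> (\<beta>'(v := c)) u} = {u \<in> ?V0. \<beta> u \<noteq> \<beta>' u}" by auto
    then show ?thesis unfolding col_adj_def by simp
  qed

  have adj_split: "restrict \<gamma> ?V0 = restrict \<gamma>' ?V0"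
    if adj: "col_adj V \<gamma> \<gamma>'" and neq: "\<gamma> v \<noteq> \<gamma>' v" for \<gamma> \<gamma>'
  proof -
    obtain a where a: "{u \<in> V. \<gamma> u \<noteq> \<gamma>' u} = {a}"
      using adj unfolding col_adj_def by (meson card_1_singletonE)
    have "v \<in> {u \<in> V. \<gamma> u \<noteq> \<gamma>' u}" using vV neq by blast
    then have "a = v" unfolding a by simp
    have one: "u = v" if "u \<in> {u \<in> V. \<gamma> u \<noteq> \<gamma>' u}" for u
      using that unfolding a \<open>a = v\<close> by simp
    have "\<forall>u\<in>?V0. \<gamma> u = \<gamma>' u"
    proof
      fix u assume "u \<in> ?V0"
      then show "\<gamma> u = \<gamma>' u" using one[of u] by auto
    qed
    then show ?thesis unfolding restrict_def by (auto intro!: ext)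
  qed

  have adj_keep: "col_adj ?V0 (restrict \<gamma> ?V0) (restrict \<gamma>' ?V0)"
    if "col_adj V \<gamma> \<gamma>'" "\<gamma> v = \<gamma>' v" for \<gamma> \<gamma>'
  proof -
    have "{u \<in> ?V0. restrict \<gamma> ?V0 u \<noteq> restrict \<gamma>' ?V0 u} = {u \<in> V. \<gamma> u \<noteq> \<gamma>' u}"
      using that(2) by auto
    then show ?thesis using that(1) unfolding col_adj_def by simp
  qed

  have Nsplit: "\<And>p. p \<in> N' \<Longrightarrow> \<exists>x c. p = (x, c) \<and> x \<in> N \<and> c \<in> {1..k} \<and>
       intro_label T v (l x) c \<in> colorings k T (induced_edges E T)"
    unfolding N'_def by blast

  have c1: "\<forall>p\<in>N'. S' p \<noteq> {}"
  proof
    fix p assume p: "p \<in> N'"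
    then obtain x c where xc: "p = (x, c)" "x \<in> N" using Nsplit by blast
    obtain \<beta> where "\<beta> \<in> S x" using ne xc by blast
    then show "S' p \<noteq> {}" using lift p xc by blast
  qed
  have c2: "\<forall>p\<in>N'. \<forall>q\<in>N'. p \<noteq> q \<longrightarrow> S' p \<inter> S' q = {}"
  proof (intro ballI impI)
    fix p q assume p: "p \<in> N'" and q: "q \<in> N'" and pq: "p \<noteq> q"
    obtain x c where xc: "p = (x, c)" "x \<in> N" using Nsplit p by blast
    obtain y d where yd: "q = (y, d)" "y \<in> N" using Nsplit q by blast
    show "S' p \<inter> S' q = {}"
    proof (rule ccontr)
      assume "S' p \<inter> S' q \<noteq> {}"
      then obtain \<gamma> where g: "\<gamma> \<in> S' (x, c)" "\<gamma> \<in> S' (y, d)" using xc yd by blast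
      then have "c = d" "restrict \<gamma> ?V0 \<in> S x" "restrict \<gamma> ?V0 \<in> S y" unfolding S'_def by auto
      moreover have "x \<noteq> y" using pq xc yd \<open>c = d\<close> by blast
      ultimately show False using dj xc yd by blast
    qed
  qed
  have cover: "(x, \<gamma> v) \<in> N' \<and> \<gamma> \<in> S' (x, \<gamma> v)"
    if "\<gamma> \<in> colorings k V E" "x \<in> N" "restrict \<gamma> ?V0 \<in> S x" for \<gamma> x
  proof -
    have "intro_label T v (l x) (\<gamma> v) \<in> colorings k T (induced_edges E T)"
      using ilab[OF that] restr(2)[OF that(1)] by simp
    then have "(x, \<gamma> v) \<in> N'" unfolding N'_def using that restr(4)[OF that(1)] by simp
    moreover have "\<gamma> \<in> S' (x, \<gamma> v)" unfolding S'_def using that by simp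
    ultimately show ?thesis by blast
  qed
  have c3: "(\<Union>p\<in>N'. S' p) = colorings k V E"
  proof
    show "(\<Union>p\<in>N'. S' p) \<subseteq> colorings k V E" unfolding S'_def by auto
    show "colorings k V E \<subseteq> (\<Union>p\<in>N'. S' p)"
    proof
      fix \<gamma> assume g: "\<gamma> \<in> colorings k V E"
      then have "restrict \<gamma> ?V0 \<in> colorings k ?V0 ?E0" by (rule restr(1))
      then obtain x where x: "x \<in> N" "restrict \<gamma> ?V0 \<in> S x" using un by blast
      then show "\<gamma> \<in> (\<Union>p\<in>N'. S' p)" using cover[OF g x] by blast
    qed
  qed
  have c4: "\<forall>p\<in>N'. \<forall>\<gamma>\<in>S' p. restrict \<gamma> T = l' p"
  proof (intro ballI)
    fix p \<gamma> assume p: "p \<in> N'" and g: "\<gamma> \<in> S' p"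
    obtain x c where xc: "p = (x, c)" "x \<in> N" using Nsplit p by blast
    have "\<gamma> \<in> colorings k V E" "restrict \<gamma> ?V0 \<in> S x" "\<gamma> v = c" using g xc unfolding S'_def by auto
    then show "restrict \<gamma> T = l' p" using ilab[of \<gamma> x] xc unfolding l'_def by simp
  qed
  have lx_ext: "l x u = undefined" if xN: "x \<in> N" and uT: "u \<notin> ?T0" for x u
  proof -
    obtain \<beta> where "\<beta> \<in> S x" using ne xN by blast
    then have "l x = restrict \<beta> ?T0" using lb xN by metis
    then show ?thesis using uT by auto
  qed
  have c5: "\<forall>p\<in>N'. \<forall>q\<in>N'. (p, q) \<in> A' \<longrightarrow> l' p \<noteq> l' q"
  proof (intro ballI impI)
    fix p q assume p: "p \<in> N'" and q: "q \<in> N'" and pq: "(p, q) \<in> A'"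
    obtain x c where xc: "p = (x, c)" "x \<in> N" using Nsplit p by blast
    obtain y d where yd: "q = (y, d)" "y \<in> N" using Nsplit q by blast
    have cases: "(x = y \<and> c \<noteq> d) \<or> ((x, y) \<in> A \<and> c = d)" using pq xc yd unfolding A'_def by auto
    then show "l' p \<noteq> l' q"
    proof
      assume "x = y \<and> c \<noteq> d"
      then have "l' p v \<noteq> l' q v" using xc yd vT unfolding l'_def intro_label_def by simp
      then show ?thesis by metis
    next
      assume h: "(x, y) \<in> A \<and> c = d"
      then have "l x \<noteq> l y" using ad xc yd by blast
      then obtain u where u: "l x u \<noteq> l y u" by blast
      then have uT: "u \<in> ?T0" using lx_ext xc yd by metis
      then have "l' p u \<noteq> l' q u" using xc yd u unfolding l'_def intro_label_def by simp
      then show ?thesis by metis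
    qed
  qed
  have c6: "\<forall>p\<in>N'. col_connected V (S' p)"
  proof
    fix p assume p: "p \<in> N'"
    obtain x c where xc: "p = (x, c)" "x \<in> N" using Nsplit p by blast
    have pxc: "(x, c) \<in> N'" using p xc by simp
    have "\<forall>\<gamma>1\<in>S' p. \<forall>\<gamma>2\<in>S' p. (\<gamma>1, \<gamma>2) \<in> (RS V (S' p))\<^sup>*"
    proof (intro ballI)
      fix \<gamma>1 \<gamma>2 assume g1: "\<gamma>1 \<in> S' p" and g2: "\<gamma>2 \<in> S' p"
      have h1: "\<gamma>1 \<in> colorings k V E" "restrict \<gamma>1 ?V0 \<in> S x" "\<gamma>1 v = c" using g1 xc unfolding S'_def by auto
      have h2: "\<gamma>2 \<in> colorings k V E" "restrict \<gamma>2 ?V0 \<in> S x" "\<gamma>2 v = c" using g2 xc unfolding S'_def by auto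
      have "col_connected ?V0 (S x)" using cc xc(2) by blast
      then have allc: "\<forall>a\<in>S x. \<forall>b\<in>S x. (a, b) \<in> (RS ?V0 (S x))\<^sup>*" unfolding col_connected_def by blast
      have "(restrict \<gamma>1 ?V0, restrict \<gamma>2 ?V0) \<in> (RS ?V0 (S x))\<^sup>*"
        using allc[rule_format, OF h1(2) h2(2)] .
      then have "((restrict \<gamma>1 ?V0)(v := c), (restrict \<gamma>2 ?V0)(v := c)) \<in> (RS V (S' p))\<^sup>*"
      proof (rule rtrancl_map)
        fix a b assume "(a, b) \<in> RS ?V0 (S x)"
        then have ab: "a \<in> S x" "b \<in> S x" "col_adj ?V0 a b" by auto
        have "a(v := c) \<in> S' p" "b(v := c) \<in> S' p" using lift[OF pxc ab(1)] lift[OF pxc ab(2)] xc(1) by simp_all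
        moreover have "col_adj V (a(v := c)) (b(v := c))" using ab(3) adj_same by simp
        ultimately show "(a(v := c), b(v := c)) \<in> RS V (S' p)" by blast
      qed
      then show "(\<gamma>1, \<gamma>2) \<in> (RS V (S' p))\<^sup>*" using restr(3)[OF h1(1)] restr(3)[OF h2(1)] h1(3) h2(3) by simp
    qed
    then show "col_connected V (S' p)" using c1 p unfolding col_connected_def by blast
  qed
  have c7: "\<forall>p\<in>N'. \<forall>q\<in>N'. p \<noteq> q \<longrightarrow> ((p, q) \<in> A' \<longleftrightarrow> (\<exists>\<gamma>\<in>S' p. \<exists>\<gamma>'\<in>S' q. col_adj V \<gamma> \<gamma>'))"
  proof (intro ballI impI)
    fix p q assume p: "p \<in> N'" and q: "q \<in> N'" and pq: "p \<noteq> q"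
    obtain x c where xc: "p = (x, c)" "x \<in> N" using Nsplit p by blast
    obtain y d where yd: "q = (y, d)" "y \<in> N" using Nsplit q by blast
    have pxc: "(x, c) \<in> N'" and qyd: "(y, d) \<in> N'" using p q xc yd by simp_all
    show "(p, q) \<in> A' \<longleftrightarrow> (\<exists>\<gamma>\<in>S' p. \<exists>\<gamma>'\<in>S' q. col_adj V \<gamma> \<gamma>')"
    proof
      assume "(p, q) \<in> A'"
      then have cases: "(x = y \<and> c \<noteq> d) \<or> ((x, y) \<in> A \<and> c = d \<and> x \<noteq> y)" using pq xc yd unfolding A'_def by auto
      then show "\<exists>\<gamma>\<in>S' p. \<exists>\<gamma>'\<in>S' q. col_adj V \<gamma> \<gamma>'"
      proof
        assume h: "x = y \<and> c \<noteq> d"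
        obtain \<beta> where b: "\<beta> \<in> S x" using ne xc by blast
        have "{u \<in> V. (\<beta>(v := c)) u \<noteq> (\<beta>(v := d)) u} = {v}" using h vV by auto
        then have "col_adj V (\<beta>(v := c)) (\<beta>(v := d))" unfolding col_adj_def by simp
        moreover have "\<beta>(v := c) \<in> S' p" "\<beta>(v := d) \<in> S' q" using lift[OF pxc b] lift[OF qyd] b h xc yd by auto
        ultimately show ?thesis by blast
      next
        assume h: "(x, y) \<in> A \<and> c = d \<and> x \<noteq> y"
        then obtain \<beta> \<beta>' where b: "\<beta> \<in> S x" "\<beta>' \<in> S y" "col_adj ?V0 \<beta> \<beta>'" using ed xc yd by blast
        have "col_adj V (\<beta>(v := c)) (\<beta>'(v := c))" using adj_same b(3) by simp
        moreover have "\<beta>(v := c) \<in> S' p" "\<beta>'(v := c) \<in> S' q" using lift[OF pxc b(1)] lift[OF qyd b(2)] h xc yd by auto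
        ultimately show ?thesis by blast
      qed
    next
      assume "\<exists>\<gamma>\<in>S' p. \<exists>\<gamma>'\<in>S' q. col_adj V \<gamma> \<gamma>'"
      then obtain \<gamma> \<gamma>' where g: "\<gamma> \<in> S' (x, c)" "\<gamma>' \<in> S' (y, d)" "col_adj V \<gamma> \<gamma>'" using xc yd by blast
      have h1: "restrict \<gamma> ?V0 \<in> S x" "\<gamma> v = c" using g(1) unfolding S'_def by auto
      have h2: "restrict \<gamma>' ?V0 \<in> S y" "\<gamma>' v = d" using g(2) unfolding S'_def by auto
      show "(p, q) \<in> A'"
      proof (cases "c = d")
        case False
        then have "\<gamma> v \<noteq> \<gamma>' v" using h1(2) h2(2) by simp
        then have eqr: "restrict \<gamma> ?V0 = restrict \<gamma>' ?V0" using adj_split[OF g(3)] by blast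
        have "x = y"
        proof (rule ccontr)
          assume "x \<noteq> y"
          then have "S x \<inter> S y = {}" using dj xc(2) yd(2) by blast
          moreover have "restrict \<gamma> ?V0 \<in> S x \<inter> S y" using h1(1) h2(1) eqr by simp
          ultimately show False by blast
        qed
        then show ?thesis using pxc qyd pq unfolding xc(1) yd(1) A'_def by simp
      next
        case True
        then have "x \<noteq> y" using pq xc yd by simp
        moreover have adjr: "col_adj ?V0 (restrict \<gamma> ?V0) (restrict \<gamma>' ?V0)"
          using adj_keep[OF g(3)] h1(2) h2(2) True by simp
        ultimately have iff: "(x, y) \<in> A \<longleftrightarrow> (\<exists>\<gamma>\<in>S x. \<exists>\<gamma>'\<in>S y. col_adj ?V0 \<gamma> \<gamma>')"
          using ed xc(2) yd(2) by blast
        have "(x, y) \<in> A" unfolding iff using h1(1) h2(1) adjr by blast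
        then show ?thesis using pxc qyd pq True unfolding xc(1) yd(1) A'_def by simp
      qed
    qed
  qed
  have "certificate k V E T (N', A', l') S'"
    unfolding certificate_def prod.case by (intro conjI c1 c2 c3 c4 c5 c6 c7)
  moreover have "\<forall>\<gamma>\<in>colorings k V E. \<forall>x\<in>N. restrict \<gamma> ?V0 \<in> S x \<longrightarrow>
              (x, \<gamma> v) \<in> N' \<and> \<gamma> \<in> S' (x, \<gamma> v)" using cover by blast
  ultimately show ?thesis unfolding IG fst_conv by blast
qed

theorem lemma3:
  fixes V :: "'v set" and E :: "('v \<times> 'v) set" and T :: "'v set" and v :: 'v and k :: nat
    and N :: "'n set" and A :: "('n \<times> 'n) set" and l :: "'n \<Rightarrow> 'v \<Rightarrow> nat"
  assumes "simple_graph V E"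
    and "introduces V E T v"
    and "k \<ge> 1"
    and "lp_iso (N, A, l) (csg k (V - {v}) (del_vertex E v) (T - {v}))"
  shows "lp_iso (intro_graph k E T v (N, A, l)) (csg k V E T) \<and>
    (\<forall>S. certificate k (V - {v}) (del_vertex E v) (T - {v}) (N, A, l) S \<longrightarrow>
       (\<exists>S'. certificate k V E T (intro_graph k E T v (N, A, l)) S' \<and>
          (\<forall>\<gamma>\<in>colorings k V E. \<forall>x\<in>N. restrict \<gamma> (V - {v}) \<in> S x \<longrightarrow>
              (x, \<gamma> v) \<in> fst (intro_graph k E T v (N, A, l)) \<and> \<gamma> \<in> S' (x, \<gamma> v))))"
proof
  obtain S0 where c0: "certificate k (V - {v}) (del_vertex E v) (T - {v}) (N, A, l) S0"
    using iso_cert[OF assms(4)] by blast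
  obtain S' where c': "certificate k V E T (intro_graph k E T v (N, A, l)) S'"
    using P2[OF assms(1,2) c0] by blast
  obtain N' A' l' where ig: "intro_graph k E T v (N, A, l) = (N', A', l')" by (cases "intro_graph k E T v (N, A, l)") auto
  show "lp_iso (intro_graph k E T v (N, A, l)) (csg k V E T)"
    using cert_iso[of k V E T N' A' l' S'] c' unfolding ig by blast
next
  show "\<forall>S. certificate k (V - {v}) (del_vertex E v) (T - {v}) (N, A, l) S \<longrightarrow>
       (\<exists>S'. certificate k V E T (intro_graph k E T v (N, A, l)) S' \<and>
          (\<forall>\<gamma>\<in>colorings k V E. \<forall>x\<in>N. restrict \<gamma> (V - {v}) \<in> S x \<longrightarrow>
              (x, \<gamma> v) \<in> fst (intro_graph k E T v (N, A, l)) \<and> \<gamma> \<in> S' (x, \<gamma> v)))"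
    using P2[OF assms(1,2)] by blast
qed

end
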